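(* Let $(X_0,p_0)$, $(X_1,p_1)$, $(Y,d)$ be metric spaces and let $f: X_0 \to X_1$ be a function such that $f[X_0]$ is closed in $X_1$ and $f: X_0 \to f[X_0]$ is a homeomorphism. Let $F: X_0 \Rightarrow Y$ be a multi-valued function and define $\tilde F: X_1 \Rightarrow Y$ by $\tilde F(x_1) = F(x_0)$ if $x_1 = f(x_0)$ for some $x_0 \in X_0$, and $\tilde F(x_1) = Y$ otherwise. Let $P_0\subseteq X_0$ and $P_1\subseteq X_1$ be the sets of points of continuity of $F$ and $\tilde F$ respectively. Then: (1) $\tilde F$ is continuous at $x_1$ if and only if either $x_1 \notin f[X_0]$, or $x_1 = f(x_0)$ with $F$ continuous at $x_0$; hence $P_1 = f[P_0] \cup (X_1 \setminus f[X_0])$. (2) If $\Gamma$ is any of the classes $\Sigma^0_n$, $\Pi^0_n$ with $n \geq 2$, or $\Delta^1_1$ (the latter when $X_0,X_1,Y$ are complete separable metric spaces), then $P_1 \in \Gamma(X_1)$ if and only if $P_0 \in \Gamma(X_0)$; in particular if $P_0$ is not $\Pi^0_3$ (resp. not Borel) then $P_1$ is not $\Pi^0_3$ (resp. not Borel). Moreover, viewing $F$ and $\tilde F$ as subsets of $X_0\times Y$ and $X_1 \times Y$ respectively, $F \in \Gamma(X_0\times Y)$ if and only if $\tilde F \in \Gamma(X_1\times Y)$. (3) If $F(x_0)$ is closed in $Y$ for every $x_0 \in X_0$, then $\tilde F(x_1)$ is closed in $Y$ for every $x_1 \in X_1$.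
   Context: A multi-valued function $F: X \Rightarrow Y$ assigns to each $x$ a nonempty set $F(x)\subseteq Y$ and is identified with its graph $\{(x,y): y\in F(x)\}\subseteq X\times Y$. $F$ is continuous at $x$ if there is some $y \in F(x)$ such that for every $\varepsilon>0$ there is $\delta>0$ such that for every $x' \in B_p(x,\delta)$ there is $y' \in F(x')$ with $d(y,y')<\varepsilon$. Borel hierarchy: $\Sigma^0_1$ = open; $\Sigma^0_{n+1}$ = countable unions of sets whose complements are $\Sigma^0_k$ for some $k\le n$; $\Pi^0_n$ = complements of $\Sigma^0_n$ sets. For complete separable metric spaces, $\Delta^1_1$ denotes the sets that are both analytic (continuous images of closed subsets of complete separable metric spaces) and co-analytic; these are exactly the Borel sets. *)

theory Defs
  imports "HOL-Analysis.Analysis"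
begin

text \<open>A multi-valued function \<open>F : X \<Rightarrow> Y\<close> is represented as \<open>F :: 'a \<Rightarrow> 'c set\<close>
  (nonemptiness of values is assumed separately); its graph:\<close>
definition mv_graph :: "('a \<Rightarrow> 'c set) \<Rightarrow> ('a \<times> 'c) set" where
  "mv_graph F = {(x, y). y \<in> F x}"

definition mv_continuous_at :: "('a::metric_space \<Rightarrow> 'c::metric_space set) \<Rightarrow> 'a \<Rightarrow> bool" where
  "mv_continuous_at F x \<longleftrightarrow>
     (\<exists>y\<in>F x. \<forall>e>0. \<exists>\<delta>>0. \<forall>x'\<in>ball x \<delta>. \<exists>y'\<in>F x'. dist y y' < e)"

definition mv_cont_points :: "('a::metric_space \<Rightarrow> 'c::metric_space set) \<Rightarrow> 'a set" where
  "mv_cont_points F = {x. mv_continuous_at F x}"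

definition mv_extend :: "('a \<Rightarrow> 'b) \<Rightarrow> ('a \<Rightarrow> 'c set) \<Rightarrow> 'b \<Rightarrow> 'c set" where
  "mv_extend f F x1 = (if x1 \<in> range f then F (inv f x1) else UNIV)"

text \<open>Borel hierarchy. \<open>sigma_pi_aux n\<close> = (\<Sigma>^0_{n+1}, \<Union>_{k\<le>n+1} \<Pi>^0_k).\<close>
primrec sigma_pi_aux :: "nat \<Rightarrow> ('a::topological_space set set \<times> 'a set set)" where
  "sigma_pi_aux 0 = ({S. open S}, {S. closed S})"
| "sigma_pi_aux (Suc n) =
     (let S' = {\<Union>\<A> | \<A>. countable \<A> \<and> \<A> \<subseteq> snd (sigma_pi_aux n)}
      in (S', snd (sigma_pi_aux n) \<union> uminus ` S'))"

text \<open>\<open>Sigma0 n\<close> is \<Sigma>^0_n for \<open>n \<ge> 1\<close> (and empty for \<open>n = 0\<close>); \<open>Pi0 n\<close> = complements.\<close>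
definition Sigma0 :: "nat \<Rightarrow> 'a::topological_space set set" where
  "Sigma0 n = (if n = 0 then {} else fst (sigma_pi_aux (n - 1)))"

definition Pi0 :: "nat \<Rightarrow> 'a::topological_space set set" where
  "Pi0 n = uminus ` Sigma0 n"

definition complete_separable :: "'a::metric_space itself \<Rightarrow> bool" where
  "complete_separable _ \<longleftrightarrow> complete (UNIV :: 'a set) \<and> separable_space (euclidean :: 'a topology)"

end

theory Submission
  imports Defs
begin


abbreviation SS :: "nat \<Rightarrow> 'a::topological_space set set" where "SS n \<equiv> fst (sigma_pi_aux n)"
abbreviation PP :: "nat \<Rightarrow> 'a::topological_space set set" where "PP n \<equiv> snd (sigma_pi_aux n)"

lemma SS_Suc: "SS (Suc n) = {\<Union>\<A> | \<A>. countable \<A> \<and> \<A> \<subseteq> PP n}"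
  by (simp add: Let_def)
lemma PP_Suc: "PP (Suc n) = PP n \<union> uminus ` SS (Suc n)"
  by (simp add: Let_def)
declare sigma_pi_aux.simps(2)[simp del]

lemma SS_SucI: "countable \<A> \<Longrightarrow> \<A> \<subseteq> PP n \<Longrightarrow> U = \<Union>\<A> \<Longrightarrow> U \<in> SS (Suc n)"
  unfolding SS_Suc by (rule CollectI, rule exI[of _ \<A>]) simp
lemma SS_SucE: "U \<in> SS (Suc n) \<Longrightarrow> (\<And>\<A>. countable \<A> \<Longrightarrow> \<A> \<subseteq> PP n \<Longrightarrow> U = \<Union>\<A> \<Longrightarrow> thesis) \<Longrightarrow> thesis"
  unfolding SS_Suc by (drule CollectD) (elim exE conjE, simp)

lemma open_fsig0:
  fixes U :: "'a::metric_space set"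
  assumes "open U" shows "fsigma_in euclidean U"
    by (rule open_imp_fsigma_in[OF metrizable_space_euclidean]) (simp add: assms)
lemma open_fsig1: "fsigma_in euclidean U \<Longrightarrow> \<exists>\<U>. countable \<U> \<and> \<U> \<subseteq> Collect (closedin euclidean) \<and> \<Union>\<U> = U"
  by (simp add: fsigma_in_def union_of_def)
lemma closedin_eucl: "Collect (closedin euclidean) = Collect closed"
  by (rule Collect_cong) simp

lemma open_fsig: 
  fixes U :: "'a::metric_space set"
  assumes "open U" shows "\<exists>\<A>. countable \<A> \<and> \<A> \<subseteq> Collect closed \<and> \<Union>\<A> = U"
  using open_fsig1[OF open_fsig0[OF assms]] unfolding closedin_eucl .

lemma PP_mono_Suc: "PP n \<subseteq> PP (Suc n)" by (simp add: PP_Suc)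

lemma SS_mono_Suc: "SS n \<subseteq> (SS (Suc n) :: 'a::metric_space set set)"
proof (induction n)
  case 0
  show ?case
  proof
    fix U :: "'a set" assume "U \<in> SS 0"
    then have "open U" by simp
    then obtain \<A> where A: "countable \<A>" "\<A> \<subseteq> Collect closed" "\<Union>\<A> = U" using open_fsig by blast
    have "PP 0 = Collect closed" by simp
    then show "U \<in> SS (Suc 0)" using A by (intro SS_SucI[of \<A>]) simp_all
  qed
next
  case (Suc n)
  show ?case
  proof
    fix U :: "'a set" assume "U \<in> SS (Suc n)"
    then obtain \<A> where A: "countable \<A>" "\<A> \<subseteq> PP n" "U = \<Union>\<A>" by (rule SS_SucE)
    have "\<A> \<subseteq> PP (Suc n)" by (rule subset_trans[OF A(2) PP_mono_Suc])
    then show "U \<in> SS (Suc (Suc n))" using A(1,3) by (rule_tac SS_SucI[of \<A>])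
  qed
qed

lemma SS_mono: "m \<le> n \<Longrightarrow> SS m \<subseteq> (SS n :: 'a::metric_space set set)"
proof (induction n rule: dec_induct)
  case (step k) show ?case by (rule subset_trans[OF step.IH SS_mono_Suc])
qed simp

lemma PP_mono: "m \<le> n \<Longrightarrow> PP m \<subseteq> PP n"
proof (induction n rule: dec_induct)
  case (step k) show ?case by (rule subset_trans[OF step.IH PP_mono_Suc])
qed simp

lemma PP_eq: "PP n = uminus ` (SS n :: 'a::metric_space set set)"
proof (induction n)
  case 0
  have "PP 0 = {S::'a set. closed S}" "SS 0 = {S::'a set. open S}" by simp_all
  moreover have "{S::'a set. closed S} = uminus ` {S. open S}"
  proof (intro set_eqI iffI)
    fix x :: "'a set" assume "x \<in> {S. closed S}" then show "x \<in> uminus ` Collect open"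
      by (intro image_eqI[of _ _ "-x"]) (auto simp: open_Compl)
  next
    fix x :: "'a set" assume "x \<in> uminus ` Collect open"
    then obtain B where "open B" "x = - B" by blast
    then show "x \<in> {S. closed S}" by (simp add: closed_Compl)
  qed
  ultimately show ?case by simp
next
  case (Suc n)
  have "PP (Suc n) = uminus ` SS n \<union> uminus ` (SS (Suc n) :: 'a set set)"
    using Suc by (simp only: PP_Suc)
  also have "\<dots> = uminus ` SS (Suc n)" by (rule Un_absorb1[OF image_mono[OF SS_mono_Suc]])
  finally show ?case .
qed

lemma uminus_img_iff: "A \<in> uminus ` S \<longleftrightarrow> - A \<in> (S :: 'a set set)"
proof
  assume "A \<in> uminus ` S" then obtain B where "B \<in> S" "A = - B" by auto
  then show "- A \<in> S" by simp
next
  assume "- A \<in> S" then show "A \<in> uminus ` S" by (intro image_eqI[of _ _ "-A"]) simp_all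
qed

lemma PP_iff: "A \<in> PP n \<longleftrightarrow> - A \<in> (SS n :: 'a::metric_space set set)"
  unfolding PP_eq by (rule uminus_img_iff)

lemma PP_SS_Suc: "PP n \<subseteq> SS (Suc n)"
proof
  fix A assume "A \<in> PP n"
  then show "A \<in> SS (Suc n)" by (intro SS_SucI[of "{A}"]) simp_all
qed

lemma SS_Un: 
  assumes "A \<in> SS n" "B \<in> SS n" shows "A \<union> B \<in> SS n"
proof (cases n)
  case 0
  then show ?thesis using assms by (simp add: open_Un)
next
  case (Suc m)
  obtain \<A> where A: "countable \<A>" "\<A> \<subseteq> PP m" "A = \<Union>\<A>"
    using assms(1) unfolding Suc by (rule SS_SucE)
  obtain \<B> where B: "countable \<B>" "\<B> \<subseteq> PP m" "B = \<Union>\<B>"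
    using assms(2) unfolding Suc by (rule SS_SucE)
  show ?thesis unfolding Suc
  proof (rule SS_SucI[of "\<A> \<union> \<B>"])
    show "countable (\<A> \<union> \<B>)" using A B by simp
    show "\<A> \<union> \<B> \<subseteq> PP m" using A B by (rule_tac Un_least) 
    show "A \<union> B = \<Union> (\<A> \<union> \<B>)" using A B by (simp add: Union_Un_distrib)
  qed
qed

lemma PP_Int: "A \<in> PP n \<Longrightarrow> B \<in> PP n \<Longrightarrow> A \<inter> B \<in> (PP n :: 'a::metric_space set set)"
  unfolding PP_iff using SS_Un[of "-A" n "-B"] by simp

lemma SS_Int:
  assumes "A \<in> SS n" "B \<in> SS n" shows "A \<inter> B \<in> (SS n :: 'a::metric_space set set)"
proof (cases n)
  case 0
  then show ?thesis using assms by (simp add: open_Int)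
next
  case (Suc m)
  obtain \<A> where A: "countable \<A>" "\<A> \<subseteq> PP m" "A = \<Union>\<A>"
    using assms(1) unfolding Suc by (rule SS_SucE)
  obtain \<B> where B: "countable \<B>" "\<B> \<subseteq> PP m" "B = \<Union>\<B>"
    using assms(2) unfolding Suc by (rule SS_SucE)
  let ?C = "(\<lambda>(a,b). a \<inter> b) ` (\<A> \<times> \<B>)"
  have "countable ?C" using A B by simp
  moreover have "?C \<subseteq> PP m"
  proof
    fix x assume "x \<in> ?C"
    then obtain a b where "a \<in> \<A>" "b \<in> \<B>" "x = a \<inter> b" by auto
    then show "x \<in> PP m" using A(2) B(2) PP_Int by blast
  qed
  moreover have "A \<inter> B = \<Union>?C"
  proof (rule set_eqI)
    fix x show "x \<in> A \<inter> B \<longleftrightarrow> x \<in> \<Union>?C"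
    proof
      assume "x \<in> A \<inter> B"
      then obtain a b where "a \<in> \<A>" "b \<in> \<B>" "x \<in> a" "x \<in> b" using A(3) B(3) by blast
      then show "x \<in> \<Union>?C" by (intro UnionI[of "a \<inter> b"]) auto
    next
      assume "x \<in> \<Union>?C"
      then obtain a b where "a \<in> \<A>" "b \<in> \<B>" "x \<in> a \<inter> b" by auto
      then show "x \<in> A \<inter> B" using A(3) B(3) by blast
    qed
  qed
  ultimately show ?thesis unfolding Suc by (rule SS_SucI)
qed

lemma PP_Un: "A \<in> PP n \<Longrightarrow> B \<in> PP n \<Longrightarrow> A \<union> B \<in> (PP n :: 'a::metric_space set set)"
  unfolding PP_iff using SS_Int[of "-A" n "-B"] by simp

lemma open_SS: "open U \<Longrightarrow> U \<in> (SS n :: 'a::metric_space set set)"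
proof -
  assume "open U" then have "U \<in> SS 0" by simp
  then show ?thesis using SS_mono[of 0 n] by blast
qed

lemma closed_PP: "closed U \<Longrightarrow> U \<in> PP n"
proof -
  assume "closed U" then have "U \<in> PP 0" by simp
  then show ?thesis using PP_mono[of 0 n] by blast
qed

lemma closed_SS: "closed U \<Longrightarrow> 1 \<le> n \<Longrightarrow> U \<in> (SS n :: 'a::metric_space set set)"
proof -
  assume "closed U" "1 \<le> n" then have "U \<in> PP 0" by simp
  then have "U \<in> SS (Suc 0)" using PP_SS_Suc[of 0] by blast
  then show ?thesis using SS_mono[of "Suc 0" n] \<open>1 \<le> n\<close> by auto
qed

lemma open_PP: "open U \<Longrightarrow> 1 \<le> n \<Longrightarrow> U \<in> (PP n :: 'a::metric_space set set)"
proof -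
  assume "open U" "1 \<le> n" then have "closed (-U)" by (simp add: closed_Compl)
  then have "-U \<in> SS n" using closed_SS \<open>1 \<le> n\<close> by blast
  then show ?thesis by (simp add: PP_iff)
qed

lemma Sigma0_SS: "n \<ge> 1 \<Longrightarrow> Sigma0 n = SS (n - 1)"
  by (simp add: Sigma0_def)

lemma Pi0_PP: "n \<ge> 1 \<Longrightarrow> Pi0 n = (PP (n - 1) :: 'a::metric_space set set)"
  by (simp add: Pi0_def Sigma0_def PP_eq)



lemma pre_SS:
  fixes h :: "'a::metric_space \<Rightarrow> 'b::metric_space"
  assumes hc: "continuous_on UNIV h"
  shows "A \<in> SS n \<Longrightarrow> h -` A \<in> SS n"
proof (induction n arbitrary: A)
  case 0
  then have "open A" by simp
  then have "open (h -` A \<inter> UNIV)" using hc continuous_on_open_vimage[of UNIV h] by simp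
  then show ?case by simp
next
  case (Suc n)
  obtain \<A> where A: "countable \<A>" "\<A> \<subseteq> PP n" "A = \<Union>\<A>" using Suc.prems by (rule SS_SucE)
  show ?case
  proof (rule SS_SucI[of "(vimage h) ` \<A>"])
    show "countable (vimage h ` \<A>)" using A(1) by simp
    show "vimage h ` \<A> \<subseteq> PP n"
    proof
      fix x assume "x \<in> vimage h ` \<A>"
      then obtain a where a: "a \<in> \<A>" "x = h -` a" by blast
      then have "- a \<in> SS n" using A(2) PP_iff by blast
      then have "h -` (- a) \<in> SS n" by (rule Suc.IH)
      then show "x \<in> PP n" unfolding PP_iff a(2) by (simp add: vimage_Compl)
    qed
    show "h -` A = \<Union> (vimage h ` \<A>)" unfolding A(3) by (rule vimage_Union)
  qed
qed

lemma pre_PP: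
  fixes h :: "'a::metric_space \<Rightarrow> 'b::metric_space"
  assumes hc: "continuous_on UNIV h"
  shows "A \<in> PP n \<Longrightarrow> h -` A \<in> PP n"
  unfolding PP_iff using pre_SS[OF hc, of "-A" n] by (simp add: vimage_Compl)

lemma rel_SS:
  fixes g :: "'b::metric_space \<Rightarrow> 'a::metric_space"
  assumes gc: "continuous_on C g"
  shows "A \<in> SS n \<Longrightarrow> \<exists>B. B \<in> SS n \<and> B \<inter> C = g -` A \<inter> C"
proof (induction n arbitrary: A)
  case 0
  then have "open A" by simp
  then obtain B where "open B" "B \<inter> C = g -` A \<inter> C" using gc[unfolded continuous_on_open_invariant] by blast
  then show ?case by (intro exI[of _ B]) simp
next
  case (Suc n)
  obtain \<A> where A: "countable \<A>" "\<A> \<subseteq> PP n" "A = \<Union>\<A>" using Suc.prems by (rule SS_SucE)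
  have "\<forall>a\<in>\<A>. \<exists>b. b \<in> PP n \<and> b \<inter> C = g -` a \<inter> C"
  proof
    fix a assume "a \<in> \<A>"
    then have "- a \<in> SS n" using A(2) PP_iff by blast
    then obtain B where B: "B \<in> SS n" "B \<inter> C = g -` (-a) \<inter> C" using Suc.IH by blast
    have "-B \<in> PP n" using B(1) by (simp add: PP_iff)
    moreover have "(-B) \<inter> C = g -` a \<inter> C" using B(2) by blast
    ultimately show "\<exists>b. b \<in> PP n \<and> b \<inter> C = g -` a \<inter> C" by blast
  qed
  then obtain \<phi> where phi: "\<And>a. a \<in> \<A> \<Longrightarrow> \<phi> a \<in> PP n \<and> \<phi> a \<inter> C = g -` a \<inter> C" by metis
  have "\<Union>(\<phi> ` \<A>) \<in> SS (Suc n)"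
  proof (rule SS_SucI[of "\<phi> ` \<A>"])
    show "countable (\<phi> ` \<A>)" using A(1) by simp
    show "\<phi> ` \<A> \<subseteq> PP n" using phi by blast
  qed simp
  moreover have "\<Union>(\<phi> ` \<A>) \<inter> C = g -` A \<inter> C"
  proof (rule set_eqI)
    fix x show "x \<in> \<Union>(\<phi> ` \<A>) \<inter> C \<longleftrightarrow> x \<in> g -` A \<inter> C"
    proof
      assume "x \<in> \<Union>(\<phi> ` \<A>) \<inter> C"
      then obtain a where "a \<in> \<A>" "x \<in> \<phi> a" "x \<in> C" by blast
      then have "x \<in> g -` a \<inter> C" using phi by blast
      then show "x \<in> g -` A \<inter> C" using \<open>a \<in> \<A>\<close> A(3) by blast
    next
      assume "x \<in> g -` A \<inter> C"
      then obtain a where "a \<in> \<A>" "g x \<in> a" "x \<in> C" using A(3) by blast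
      then have "x \<in> \<phi> a \<inter> C" using phi by blast
      then show "x \<in> \<Union>(\<phi> ` \<A>) \<inter> C" using \<open>a \<in> \<A>\<close> by blast
    qed
  qed
  ultimately show ?case by blast
qed

lemma rel_PP:
  fixes g :: "'b::metric_space \<Rightarrow> 'a::metric_space"
  assumes gc: "continuous_on C g"
  shows "A \<in> PP n \<Longrightarrow> \<exists>B. B \<in> PP n \<and> B \<inter> C = g -` A \<inter> C"
proof -
  assume "A \<in> PP n"
  then have "-A \<in> SS n" by (simp add: PP_iff)
  then obtain B where B: "B \<in> SS n" "B \<inter> C = g -` (-A) \<inter> C" using rel_SS[OF gc] by blast
  have "-B \<in> PP n" using B(1) by (simp add: PP_iff)
  moreover have "(-B) \<inter> C = g -` A \<inter> C" using B(2) by blast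
  ultimately show ?thesis by blast
qed

lemma transfer:
  fixes h :: "'a::metric_space \<Rightarrow> 'b::metric_space"
  assumes hc: "continuous_on UNIV h" and gc: "continuous_on (range h) g"
    and gh: "\<And>x. g (h x) = x" and cl: "closed (range h)"
    and B: "B = h ` A \<union> (- range h)"
  shows "1 \<le> n \<Longrightarrow> (B \<in> SS n \<longleftrightarrow> A \<in> SS n)"
    and "1 \<le> n \<Longrightarrow> (B \<in> PP n \<longleftrightarrow> A \<in> PP n)"
    and "B \<in> sets borel \<longleftrightarrow> A \<in> sets borel"
proof -
  have AB: "A = h -` B"
  proof (rule set_eqI)
    fix x show "x \<in> A \<longleftrightarrow> x \<in> h -` B"
    proof
      assume "x \<in> h -` B"
      then have "h x \<in> h ` A" unfolding B by blast
      then obtain a where "a \<in> A" "h x = h a" by blast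
      then show "x \<in> A" using gh by metis
    qed (simp add: B)
  qed
  have hA: "h ` A = g -` A \<inter> range h"
  proof (rule set_eqI)
    fix y show "y \<in> h ` A \<longleftrightarrow> y \<in> g -` A \<inter> range h"
    proof
      assume "y \<in> h ` A" then obtain a where "a \<in> A" "y = h a" by blast
      then show "y \<in> g -` A \<inter> range h" using gh by simp
    next
      assume "y \<in> g -` A \<inter> range h"
      then obtain x where "y = h x" "g y \<in> A" by blast
      then show "y \<in> h ` A" using gh by simp
    qed
  qed
  have oC: "open (- range h)" using cl by (simp add: open_Compl)
  show "1 \<le> n \<Longrightarrow> (B \<in> SS n \<longleftrightarrow> A \<in> SS n)"
  proof
    assume "B \<in> SS n" then show "A \<in> SS n" unfolding AB by (rule pre_SS[OF hc])
  next
    assume n: "1 \<le> n" and "A \<in> SS n"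
    then obtain B' where B': "B' \<in> SS n" "B' \<inter> range h = g -` A \<inter> range h"
      using rel_SS[OF gc] by blast
    have "B' \<inter> range h \<in> SS n" using B'(1) closed_SS[OF cl n] by (rule SS_Int)
    moreover have "- range h \<in> SS n" using oC by (rule open_SS)
    ultimately have "B' \<inter> range h \<union> - range h \<in> SS n" by (rule SS_Un)
    then show "B \<in> SS n" unfolding B hA B'(2) .
  qed
  show "1 \<le> n \<Longrightarrow> (B \<in> PP n \<longleftrightarrow> A \<in> PP n)"
  proof
    assume "B \<in> PP n" then show "A \<in> PP n" unfolding AB by (rule pre_PP[OF hc])
  next
    assume n: "1 \<le> n" and "A \<in> PP n"
    then obtain B' where B': "B' \<in> PP n" "B' \<inter> range h = g -` A \<inter> range h"
      using rel_PP[OF gc] by blast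
    have "B' \<inter> range h \<in> PP n" using B'(1) closed_PP[OF cl] by (rule PP_Int)
    moreover have "- range h \<in> PP n" using oC n by (rule open_PP)
    ultimately have "B' \<inter> range h \<union> - range h \<in> PP n" by (rule PP_Un)
    then show "B \<in> PP n" unfolding B hA B'(2) .
  qed
  show "B \<in> sets borel \<longleftrightarrow> A \<in> sets borel"
  proof
    assume "B \<in> sets borel"
    then have "h -` B \<inter> space borel \<in> sets borel"
      by (rule measurable_sets[OF borel_measurable_continuous_onI[OF hc]])
    then show "A \<in> sets borel" unfolding AB by simp
  next
    assume A: "A \<in> sets borel"
    define k where "k = (\<lambda>x. if x \<in> range h then g x else (\<lambda>_. undefined) x)"
    have "k \<in> borel_measurable borel" unfolding k_def
      by (rule borel_measurable_continuous_on_if[OF borel_closed[OF cl] gc continuous_on_const])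
    then have "k -` A \<inter> space borel \<in> sets borel" using A by (rule measurable_sets)
    then have "k -` A \<in> sets borel" by simp
    moreover have "h ` A = k -` A \<inter> range h" unfolding hA k_def by auto
    moreover have "k -` A \<inter> range h \<in> sets borel" using \<open>k -` A \<in> sets borel\<close> borel_closed[OF cl] by (rule sets.Int)
    ultimately have "h ` A \<in> sets borel" by simp
    then show "B \<in> sets borel" unfolding B using borel_open[OF oC] by (rule sets.Un)
  qed
qed



lemma ext_f:
  assumes gf: "\<And>x. g (f x) = x"
  shows "mv_extend f F (f x) = F x"
proof -
  have "inj f" by (metis gf injI)
  then show ?thesis by (simp add: mv_extend_def)
qed

lemma ext_nf: "z \<notin> range f \<Longrightarrow> mv_extend f F z = UNIV"
  by (simp add: mv_extend_def)

lemma cont_ext: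
  fixes f :: "'a::metric_space \<Rightarrow> 'b::metric_space" and F :: "'a \<Rightarrow> 'c::metric_space set"
  assumes fc: "continuous_on UNIV f" and gc: "continuous_on (range f) g"
    and gf: "\<And>x. g (f x) = x" and cl: "closed (range f)"
  shows "mv_continuous_at (mv_extend f F) x1 \<longleftrightarrow> (x1 \<notin> range f \<or> (\<exists>x0. x1 = f x0 \<and> mv_continuous_at F x0))"
proof (cases "x1 \<in> range f")
  case False
  have "open (- range f)" using cl by (simp add: open_Compl)
  then obtain r where r: "r > 0" "ball x1 r \<subseteq> - range f" using False unfolding open_contains_ball by blast
  have "mv_continuous_at (mv_extend f F) x1"
    unfolding mv_continuous_at_def
  proof (rule bexI[of _ undefined], intro allI impI)
    fix e :: real assume "e > 0"
    show "\<exists>\<delta>>0. \<forall>x'\<in>ball x1 \<delta>. \<exists>y'\<in>mv_extend f F x'. dist undefined y' < e"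
    proof (rule exI[of _ r], intro conjI ballI)
      fix x' assume "x' \<in> ball x1 r"
      then have "x' \<notin> range f" using r by blast
      then have "undefined \<in> mv_extend f F x'" by (simp add: ext_nf)
      then show "\<exists>y'\<in>mv_extend f F x'. dist undefined y' < e" using \<open>e > 0\<close> by (intro bexI[of _ undefined]) simp_all
    qed (rule r(1))
  qed (simp add: ext_nf False)
  then show ?thesis using False by simp
next
  case True
  then obtain x0 where x0: "x1 = f x0" by blast
  have rhs: "(x1 \<notin> range f \<or> (\<exists>x0. x1 = f x0 \<and> mv_continuous_at F x0)) \<longleftrightarrow> mv_continuous_at F x0"
    using x0 gf by (metis rangeI)
  have "mv_continuous_at (mv_extend f F) (f x0) \<longleftrightarrow> mv_continuous_at F x0"
  proof
    assume "mv_continuous_at (mv_extend f F) (f x0)"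
    then obtain y where y: "y \<in> F x0"
      and H: "\<forall>e>0. \<exists>\<delta>>0. \<forall>x'\<in>ball (f x0) \<delta>. \<exists>y'\<in>mv_extend f F x'. dist y y' < e"
      unfolding mv_continuous_at_def ext_f[where g=g and f=f, OF gf] by blast
    show "mv_continuous_at F x0" unfolding mv_continuous_at_def
    proof (rule bexI[OF _ y], intro allI impI)
      fix e :: real assume "e > 0"
      then obtain \<delta> where d: "\<delta> > 0" "\<forall>x'\<in>ball (f x0) \<delta>. \<exists>y'\<in>mv_extend f F x'. dist y y' < e"
        using H by blast
      obtain d' where d': "d' > 0" "\<forall>x'\<in>UNIV. dist x' x0 < d' \<longrightarrow> dist (f x') (f x0) < \<delta>"
        using fc[unfolded continuous_on_iff] d(1) by blast
      show "\<exists>\<delta>>0. \<forall>x'\<in>ball x0 \<delta>. \<exists>y'\<in>F x'. dist y y' < e"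
      proof (rule exI[of _ d'], intro conjI ballI)
        fix x' assume "x' \<in> ball x0 d'"
        then have "dist x' x0 < d'" by (simp add: dist_commute)
        then have "f x' \<in> ball (f x0) \<delta>" using d' by (simp add: dist_commute)
        then show "\<exists>y'\<in>F x'. dist y y' < e" using d(2) ext_f[where g=g and f=f and F=F and x=x', OF gf] by metis
      qed (rule d'(1))
    qed
  next
    assume "mv_continuous_at F x0"
    then obtain y where y: "y \<in> F x0"
      and H: "\<forall>e>0. \<exists>\<delta>>0. \<forall>x'\<in>ball x0 \<delta>. \<exists>y'\<in>F x'. dist y y' < e"
      unfolding mv_continuous_at_def by blast
    have y': "y \<in> mv_extend f F (f x0)" using y ext_f[where g=g and f=f, OF gf] by metis
    show "mv_continuous_at (mv_extend f F) (f x0)" unfolding mv_continuous_at_def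
    proof (rule bexI[OF _ y'], intro allI impI)
      fix e :: real assume "e > 0"
      then obtain \<delta> where d: "\<delta> > 0" "\<forall>x'\<in>ball x0 \<delta>. \<exists>y'\<in>F x'. dist y y' < e"
        using H by blast
      obtain d' where d': "d' > 0" "\<forall>x'\<in>range f. dist x' (f x0) < d' \<longrightarrow> dist (g x') (g (f x0)) < \<delta>"
        using gc[unfolded continuous_on_iff] d(1) by blast
      show "\<exists>\<delta>>0. \<forall>x'\<in>ball (f x0) \<delta>. \<exists>y'\<in>mv_extend f F x'. dist y y' < e"
      proof (rule exI[of _ d'], intro conjI ballI)
        fix x' assume x': "x' \<in> ball (f x0) d'"
        show "\<exists>y'\<in>mv_extend f F x'. dist y y' < e"
        proof (cases "x' \<in> range f")
          case True
          then obtain z where z: "x' = f z" by blast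
          have "dist x' (f x0) < d'" using x' by (simp add: dist_commute)
          then have "dist z x0 < \<delta>" using d' True z gf by metis
          then have "z \<in> ball x0 \<delta>" by (simp add: dist_commute)
          then show ?thesis using d(2) z ext_f[where g=g and f=f and F=F and x=z, OF gf] by metis
        next
          case False
          then show ?thesis using \<open>e > 0\<close> by (intro bexI[of _ y]) (simp_all add: ext_nf)
        qed
      qed (rule d'(1))
    qed
  qed
  then show ?thesis using rhs x0 by simp
qed

theorem lemma2p3:
  fixes f :: "'a::metric_space \<Rightarrow> 'b::metric_space"
    and F :: "'a \<Rightarrow> 'c::metric_space set"
  assumes f_closed: "closed (range f)"
    and f_homeo: "\<exists>g. homeomorphism UNIV (range f) f g"
    and F_nonempty: "\<And>x. F x \<noteq> {}"
  shows
    \<comment> \<open>(1)\<close>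
    "(\<forall>x1. mv_continuous_at (mv_extend f F) x1 \<longleftrightarrow>
        (x1 \<notin> range f \<or> (\<exists>x0. x1 = f x0 \<and> mv_continuous_at F x0)))
     \<and> mv_cont_points (mv_extend f F) = f ` mv_cont_points F \<union> (UNIV - range f)
    \<comment> \<open>(2) for \<Sigma>^0_n, \<Pi>^0_n, n \<ge> 2\<close>
     \<and> (\<forall>n\<ge>2.
          (mv_cont_points (mv_extend f F) \<in> Sigma0 n \<longleftrightarrow> mv_cont_points F \<in> Sigma0 n)
        \<and> (mv_cont_points (mv_extend f F) \<in> Pi0 n \<longleftrightarrow> mv_cont_points F \<in> Pi0 n)
        \<and> (mv_graph F \<in> Sigma0 n \<longleftrightarrow> mv_graph (mv_extend f F) \<in> Sigma0 n)
        \<and> (mv_graph F \<in> Pi0 n \<longleftrightarrow> mv_graph (mv_extend f F) \<in> Pi0 n))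
    \<comment> \<open>(2) for \<Delta>^1_1 = Borel, in complete separable metric spaces\<close>
     \<and> ((complete_separable TYPE('a) \<and> complete_separable TYPE('b) \<and> complete_separable TYPE('c)) \<longrightarrow>
          (mv_cont_points (mv_extend f F) \<in> sets borel \<longleftrightarrow> mv_cont_points F \<in> sets borel)
        \<and> (mv_graph F \<in> sets borel \<longleftrightarrow> mv_graph (mv_extend f F) \<in> sets borel))
    \<comment> \<open>(3)\<close>
     \<and> ((\<forall>x0. closed (F x0)) \<longrightarrow> (\<forall>x1. closed (mv_extend f F x1)))"
proof -
  obtain g where hom: "homeomorphism UNIV (range f) f g" using f_homeo by blast
  have gf: "\<And>x. g (f x) = x" using hom by (simp add: homeomorphism_def)
  have fc: "continuous_on UNIV f" using hom by (simp add: homeomorphism_def)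
  have gc: "continuous_on (range f) g" using hom by (simp add: homeomorphism_def)
  have P1: "\<forall>x1. mv_continuous_at (mv_extend f F) x1 \<longleftrightarrow>
        (x1 \<notin> range f \<or> (\<exists>x0. x1 = f x0 \<and> mv_continuous_at F x0))"
    using cont_ext[OF fc gc gf f_closed] by blast
  have Peq: "mv_cont_points (mv_extend f F) = f ` mv_cont_points F \<union> (- range f)"
    unfolding mv_cont_points_def using P1 by blast
  then have P2: "mv_cont_points (mv_extend f F) = f ` mv_cont_points F \<union> (UNIV - range f)"
    by (simp add: Compl_eq_Diff_UNIV)
  note TP = transfer[OF fc gc gf f_closed Peq]
  define h2 where "h2 = (\<lambda>p::'a \<times> 'c. (f (fst p), snd p))"
  define g2 where "g2 = (\<lambda>p::'b \<times> 'c. (g (fst p), snd p))"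
  have rh2: "range h2 = range f \<times> UNIV"
  proof (rule set_eqI)
    fix q :: "'b \<times> 'c" show "q \<in> range h2 \<longleftrightarrow> q \<in> range f \<times> UNIV"
    proof
      assume "q \<in> range f \<times> UNIV"
      then obtain x where "fst q = f x" by auto
      then have "q = h2 (x, snd q)" unfolding h2_def by (simp add: prod_eq_iff)
      then show "q \<in> range h2" by blast
    qed (auto simp: h2_def)
  qed
  have h2c: "continuous_on UNIV h2" unfolding h2_def
    by (intro continuous_on_Pair continuous_on_snd continuous_on_compose2[OF fc continuous_on_fst]) simp_all
  have g2c: "continuous_on (range h2) g2" unfolding g2_def rh2
    by (intro continuous_on_Pair continuous_on_snd continuous_on_compose2[OF gc continuous_on_fst]) auto
  have g2h2: "\<And>p. g2 (h2 p) = p" unfolding g2_def h2_def by (simp add: gf)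
  have cl2: "closed (range h2)" unfolding rh2 by (rule closed_Times[OF f_closed closed_UNIV])
  have Geq: "mv_graph (mv_extend f F) = h2 ` mv_graph F \<union> (- range h2)"
  proof (rule set_eqI)
    fix q :: "'b \<times> 'c"
    obtain a b where q: "q = (a, b)" by (cases q)
    show "q \<in> mv_graph (mv_extend f F) \<longleftrightarrow> q \<in> h2 ` mv_graph F \<union> (- range h2)"
    proof (cases "a \<in> range f")
      case True
      then obtain x where x: "a = f x" by blast
      have "q \<in> h2 ` mv_graph F \<longleftrightarrow> b \<in> F x"
      proof
        assume "q \<in> h2 ` mv_graph F"
        then obtain x' b' where "(x', b') \<in> mv_graph F" "q = h2 (x', b')" by auto
        then have "b' \<in> F x'" "f x' = a" "b' = b" unfolding h2_def mv_graph_def q by auto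
        then show "b \<in> F x" using x gf by metis
      next
        assume "b \<in> F x"
        then have "(x, b) \<in> mv_graph F" by (simp add: mv_graph_def)
        moreover have "q = h2 (x, b)" unfolding h2_def q x by simp
        ultimately show "q \<in> h2 ` mv_graph F" by blast
      qed
      moreover have "q \<in> range h2" unfolding rh2 q using True by simp
      moreover have "q \<in> mv_graph (mv_extend f F) \<longleftrightarrow> b \<in> F x"
        unfolding q x mv_graph_def by (simp add: ext_f[where g=g and f=f, OF gf])
      ultimately show ?thesis by blast
    next
      case False
      have "q \<notin> range h2" unfolding rh2 q using False by simp
      moreover have "q \<in> mv_graph (mv_extend f F)"
        unfolding q mv_graph_def using False by (simp add: ext_nf)
      ultimately show ?thesis by blast
    qed
  qed
  note TG = transfer[OF h2c g2c g2h2 cl2 Geq]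
  have part2: "\<forall>n\<ge>2.
          (mv_cont_points (mv_extend f F) \<in> Sigma0 n \<longleftrightarrow> mv_cont_points F \<in> Sigma0 n)
        \<and> (mv_cont_points (mv_extend f F) \<in> Pi0 n \<longleftrightarrow> mv_cont_points F \<in> Pi0 n)
        \<and> (mv_graph F \<in> Sigma0 n \<longleftrightarrow> mv_graph (mv_extend f F) \<in> Sigma0 n)
        \<and> (mv_graph F \<in> Pi0 n \<longleftrightarrow> mv_graph (mv_extend f F) \<in> Pi0 n)"
  proof (intro allI impI)
    fix n :: nat assume n: "2 \<le> n"
    then have n1: "1 \<le> n" "1 \<le> n - 1" by simp_all
    show "(mv_cont_points (mv_extend f F) \<in> Sigma0 n \<longleftrightarrow> mv_cont_points F \<in> Sigma0 n)
        \<and> (mv_cont_points (mv_extend f F) \<in> Pi0 n \<longleftrightarrow> mv_cont_points F \<in> Pi0 n)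
        \<and> (mv_graph F \<in> Sigma0 n \<longleftrightarrow> mv_graph (mv_extend f F) \<in> Sigma0 n)
        \<and> (mv_graph F \<in> Pi0 n \<longleftrightarrow> mv_graph (mv_extend f F) \<in> Pi0 n)"
      unfolding Sigma0_SS[OF n1(1)] Pi0_PP[OF n1(1)]
      using TP(1)[OF n1(2)] TP(2)[OF n1(2)] TG(1)[OF n1(2)] TG(2)[OF n1(2)] by blast
  qed
  have part3: "(\<forall>x0. closed (F x0)) \<longrightarrow> (\<forall>x1. closed (mv_extend f F x1))"
    by (simp add: mv_extend_def)
  show ?thesis using P1 P2 part2 TP(3) TG(3) part3 by blast
qed

end
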